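(* Let $\pi:E\to\mathbb{R}^k$ be a fiber bundle, $L:J^1\pi\to\mathbb{R}$ a Lagrangian and ${\bf\Gamma}=(\Gamma_1,\dots,\Gamma_k)$ a SOPDE on $J^1\pi$. Then the equation $\sum_\alpha\mathcal{L}_{\Gamma_\alpha}\Theta^\alpha_L=dL$ is equivalent to the equation $$\sum_{\alpha=1}^k i_{\Gamma_\alpha}\Omega^\alpha_L=(k-1)\,dL,$$ where $\Omega^\alpha_L=-d\Theta^\alpha_L$.
   Context: $E$ is $(n+k)$-dimensional with adapted coordinates $(x^\alpha,q^i)$, $x^\alpha$ standard coordinates on $\mathbb{R}^k$; $J^1\pi$ has coordinates $(x^\alpha,q^i,v^i_\alpha)$; summation over repeated indices. The Poincaré–Cartan $1$-forms are $\Theta^\alpha_L=L\,dx^\alpha+dL\circ S^\alpha$ with $S^\alpha=(dq^i-v^i_\beta dx^\beta)\otimes\partial/\partial v^i_\alpha$, i.e. locally $\Theta^\alpha_L=\frac{\partial L}{\partial v^i_\alpha}(dq^i-v^i_\beta dx^\beta)+L\,dx^\alpha$; $\Omega^\alpha_L=-d\Theta^\alpha_L$ are the Poincaré–Cartan $2$-forms. A SOPDE is a $k$-tuple of vector fields $\Gamma_\alpha$ on $J^1\pi$ with $dx^\alpha(\Gamma_\beta)=\delta^\alpha_\beta$ and $(dq^i-v^i_\gamma dx^\gamma)(\Gamma_\beta)=0$ for all $i,\alpha,\beta$. *)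

theory Defs
  imports "HOL-Analysis.Analysis"
begin

text \<open>Adapted coordinates on J^1 pi: x^alpha (alpha in 'k), q^i (i in 'n), v^i_alpha.\<close>

datatype ('k, 'n) coord = X 'k | Q 'n | V 'n 'k

instance coord :: (finite, finite) finite
proof
  have "(UNIV :: ('a, 'b) coord set) = range X \<union> range Q \<union> (case_prod V ` UNIV)"
  proof (intro set_eqI iffI)
    fix c :: "('a, 'b) coord"
    show "c \<in> range X \<union> range Q \<union> (case_prod V ` UNIV)"
      by (cases c) auto
  qed auto
  moreover have "finite (range (X :: 'a \<Rightarrow> ('a, 'b) coord))" by simp
  moreover have "finite (range (Q :: 'b \<Rightarrow> ('a, 'b) coord))" by simp
  moreover have "finite ((case_prod V :: 'b \<times> 'a \<Rightarrow> ('a, 'b) coord) ` UNIV)" by simp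
  ultimately show "finite (UNIV :: ('a, 'b) coord set)" by (metis finite_Un)
qed

type_synonym ('k, 'n) pt = "real ^ ('k, 'n) coord"

definition vc :: "('k::finite, 'n::finite) pt \<Rightarrow> 'n \<Rightarrow> 'k \<Rightarrow> real" where
  "vc p i \<alpha> = p $ V i \<alpha>"

definition pd :: "('k::finite, 'n::finite) coord \<Rightarrow> (('k, 'n) pt \<Rightarrow> real) \<Rightarrow> ('k, 'n) pt \<Rightarrow> real" where
  "pd c f p = frechet_derivative f (at p) (axis c 1)"

fun pds :: "('k::finite, 'n::finite) coord list \<Rightarrow> (('k, 'n) pt \<Rightarrow> real) \<Rightarrow> ('k, 'n) pt \<Rightarrow> real" where
  "pds [] f = f"
| "pds (c # cs) f = pd c (pds cs f)"

definition smooth_on :: "('k::finite, 'n::finite) pt set \<Rightarrow> (('k, 'n) pt \<Rightarrow> real) \<Rightarrow> bool" where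
  "smooth_on U f \<longleftrightarrow> (\<forall>cs. pds cs f differentiable_on U)"

text \<open>1-forms: coefficient functions w.r.t. the coordinate coframe;
  2-forms: coefficients omega_ab = omega(d/dc_a, d/dc_b); vector fields: vector-valued.\<close>
type_synonym ('k, 'n) form1 = "('k, 'n) pt \<Rightarrow> ('k, 'n) coord \<Rightarrow> real"
type_synonym ('k, 'n) form2 = "('k, 'n) pt \<Rightarrow> ('k, 'n) coord \<Rightarrow> ('k, 'n) coord \<Rightarrow> real"
type_synonym ('k, 'n) vfield = "('k, 'n) pt \<Rightarrow> ('k, 'n) pt"

definition ev :: "(('k::finite, 'n::finite) coord \<Rightarrow> real) \<Rightarrow> ('k, 'n) pt \<Rightarrow> real" where
  "ev w Y = (\<Sum>c\<in>UNIV. w c * Y $ c)"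

definition dF :: "(('k::finite, 'n::finite) pt \<Rightarrow> real) \<Rightarrow> ('k, 'n) form1" where
  "dF f p c = pd c f p"

definition d1 :: "('k::finite, 'n::finite) form1 \<Rightarrow> ('k, 'n) form2" where
  "d1 \<theta> p a b = pd a (\<lambda>q. \<theta> q b) p - pd b (\<lambda>q. \<theta> q a) p"

definition iv :: "('k::finite, 'n::finite) vfield \<Rightarrow> ('k, 'n) form2 \<Rightarrow> ('k, 'n) form1" where
  "iv Xf \<omega> p b = (\<Sum>a\<in>UNIV. Xf p $ a * \<omega> p a b)"

definition lie :: "('k::finite, 'n::finite) vfield \<Rightarrow> ('k, 'n) form1 \<Rightarrow> ('k, 'n) form1" where
  "lie Xf \<theta> p b = (\<Sum>a\<in>UNIV. Xf p $ a * pd a (\<lambda>q. \<theta> q b) p)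
                 + (\<Sum>a\<in>UNIV. \<theta> p a * pd b (\<lambda>q. Xf q $ a) p)"

text \<open>The canonical (1,1)-tensor fields S^alpha = (dq^i - v^i_beta dx^beta) \<otimes> d/dv^i_alpha.\<close>
definition Sten :: "'k \<Rightarrow> ('k::finite, 'n::finite) pt \<Rightarrow> ('k, 'n) pt \<Rightarrow> ('k, 'n) pt" where
  "Sten \<alpha> p Y = (\<chi> c. case c of
       V i \<beta> \<Rightarrow> (if \<beta> = \<alpha> then Y $ Q i - (\<Sum>\<gamma>\<in>UNIV. vc p i \<gamma> * Y $ X \<gamma>) else 0)
     | _ \<Rightarrow> 0)"

definition Theta :: "(('k::finite, 'n::finite) pt \<Rightarrow> real) \<Rightarrow> 'k \<Rightarrow> ('k, 'n) form1" where
  "Theta L \<alpha> p c = L p * (if c = X \<alpha> then 1 else 0) + ev (dF L p) (Sten \<alpha> p (axis c 1))"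

definition Omega :: "(('k::finite, 'n::finite) pt \<Rightarrow> real) \<Rightarrow> 'k \<Rightarrow> ('k, 'n) form2" where
  "Omega L \<alpha> p a b = - d1 (Theta L \<alpha>) p a b"

definition is_SOPDE :: "('k::finite, 'n::finite) pt set \<Rightarrow> ('k \<Rightarrow> ('k, 'n) vfield) \<Rightarrow> bool" where
  "is_SOPDE U \<Gamma> \<longleftrightarrow> (\<forall>p\<in>U. \<forall>\<alpha> \<beta>.
      \<Gamma> \<beta> p $ X \<alpha> = (if \<alpha> = \<beta> then 1 else 0) \<and>
      (\<forall>i. \<Gamma> \<beta> p $ Q i - (\<Sum>\<gamma>\<in>UNIV. vc p i \<gamma> * \<Gamma> \<beta> p $ X \<gamma>) = 0))"

end

theory Submission
  imports Defs
begin

lemma fd_has: "f differentiable (at p) \<Longrightarrow> (f has_derivative frechet_derivative f (at p)) (at p)"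
  using frechet_derivative_works by blast

lemma pd_add:
  assumes "f differentiable (at p)" "g differentiable (at p)"
  shows "pd c (\<lambda>q. f q + g q) p = pd c f p + pd c g p"
proof -
  have "((\<lambda>q. f q + g q) has_derivative (\<lambda>h. frechet_derivative f (at p) h + frechet_derivative g (at p) h)) (at p)"
    by (intro has_derivative_add fd_has assms)
  note fd = frechet_derivative_at[OF this]
  show ?thesis unfolding pd_def fd[symmetric] by simp
qed

lemma pd_mult:
  assumes "f differentiable (at p)" "g differentiable (at p)"
  shows "pd c (\<lambda>q. f q * g q) p = f p * pd c g p + pd c f p * g p"
proof -
  have "((\<lambda>q. f q * g q) has_derivative (\<lambda>h. f p * frechet_derivative g (at p) h + frechet_derivative f (at p) h * g p)) (at p)"
    by (intro has_derivative_mult fd_has assms)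
  note fd = frechet_derivative_at[OF this]
  show ?thesis unfolding pd_def fd[symmetric] by simp
qed

lemma pd_cmult:
  assumes "f differentiable (at p)"
  shows "pd c (\<lambda>q. k * f q) p = k * pd c f p"
proof -
  have "((\<lambda>q. k * f q) has_derivative (\<lambda>h. k * frechet_derivative f (at p) h)) (at p)"
    by (intro has_derivative_mult_right fd_has assms)
  note fd = frechet_derivative_at[OF this]
  show ?thesis unfolding pd_def fd[symmetric] by simp
qed

lemma pd_sum:
  assumes "finite S" "\<And>s. s \<in> S \<Longrightarrow> f s differentiable (at p)"
  shows "pd c (\<lambda>q. \<Sum>s\<in>S. f s q) p = (\<Sum>s\<in>S. pd c (f s) p)"
proof -
  have "((\<lambda>q. \<Sum>s\<in>S. f s q) has_derivative (\<lambda>h. \<Sum>s\<in>S. frechet_derivative (f s) (at p) h)) (at p)"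
    by (intro has_derivative_sum fd_has assms)
  note fd = frechet_derivative_at[OF this]
  show ?thesis unfolding pd_def fd[symmetric] by simp
qed

lemma pd_cong_open:
  assumes "open U" "p \<in> U" "\<And>q. q \<in> U \<Longrightarrow> f q = g q"
  shows "pd c f p = pd c g p"
proof -
  have "(f has_derivative D) (at p) \<longleftrightarrow> (g has_derivative D) (at p)" for D
    using has_derivative_transform_within_open[OF _ assms(1,2), where f=f and g=g and t=UNIV]
      has_derivative_transform_within_open[OF _ assms(1,2), where f=g and g=f and t=UNIV] assms(3)
    by auto
  then have "frechet_derivative f (at p) = frechet_derivative g (at p)"
    unfolding frechet_derivative_def by simp
  then show ?thesis unfolding pd_def by simp
qed

lemma cartan:
  assumes "\<And>c. (\<lambda>q. \<theta> q c) differentiable (at p)" "\<And>c. (\<lambda>q. Xf q $ c) differentiable (at p)"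
  shows "lie Xf \<theta> p b = iv Xf (d1 \<theta>) p b + pd b (\<lambda>q. \<Sum>a\<in>UNIV. \<theta> q a * Xf q $ a) p"
proof -
  have "pd b (\<lambda>q. \<Sum>a\<in>UNIV. \<theta> q a * Xf q $ a) p = (\<Sum>a\<in>UNIV. pd b (\<lambda>q. \<theta> q a * Xf q $ a) p)"
    by (rule pd_sum) (auto intro!: differentiable_mult assms)
  also have "\<dots> = (\<Sum>a\<in>UNIV. \<theta> p a * pd b (\<lambda>q. Xf q $ a) p + pd b (\<lambda>q. \<theta> q a) p * Xf p $ a)"
    by (intro sum.cong refl pd_mult assms)
  finally have e: "pd b (\<lambda>q. \<Sum>a\<in>UNIV. \<theta> q a * Xf q $ a) p = (\<Sum>a\<in>UNIV. \<theta> p a * pd b (\<lambda>q. Xf q $ a) p) + (\<Sum>a\<in>UNIV. Xf p $ a * pd b (\<lambda>q. \<theta> q a) p)"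
    by (simp add: sum.distrib mult.commute)
  have "iv Xf (d1 \<theta>) p b = (\<Sum>a\<in>UNIV. Xf p $ a * pd a (\<lambda>q. \<theta> q b) p) - (\<Sum>a\<in>UNIV. Xf p $ a * pd b (\<lambda>q. \<theta> q a) p)"
    unfolding iv_def d1_def by (simp add: right_diff_distrib sum_subtractf)
  then show ?thesis unfolding lie_def e by simp
qed

lemma sum_ind1: "(\<Sum>c\<in>UNIV. (if d = c then 1 else 0) * (f c::real)) = f (d::'a::finite)"
proof -
  have "(\<lambda>c. (if d = c then 1 else 0) * f c) = (\<lambda>c. if d = c then f d else 0)" by auto
  then show ?thesis by (simp only:) simp
qed

lemma sum_ind2: "(\<Sum>c\<in>UNIV. k * (if c = d then 1 else 0) * (f c::real)) = k * f (d::'a::finite)"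
proof -
  have "(\<lambda>c. k * (if c = d then 1 else 0) * f c) = (\<lambda>c. if d = c then k * f d else 0)" by auto
  then show ?thesis by (simp only:) simp
qed

lemma axis1_nth: "(axis c (1::real) :: ('k::finite,'n::finite) pt) $ d = (if d = c then 1 else 0)"
  unfolding axis_def by simp

lemma comp_diff: "(\<lambda>q::('k::finite,'n::finite) pt. q $ j) differentiable (at p)"
  by (rule bounded_linear_imp_differentiable) (rule bounded_linear_vec_nth)

lemma Sten_diff: "(\<lambda>q. Sten \<alpha> q Y $ c') differentiable (at p)"
proof (cases c')
  case (V i \<beta>)
  show ?thesis
  proof (cases "\<beta> = \<alpha>")
    case True
    have "(\<lambda>q. Y $ Q i - (\<Sum>\<gamma>\<in>UNIV. q $ V i \<gamma> * Y $ X \<gamma>)) differentiable (at p)"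
      by (intro differentiable_diff differentiable_sum differentiable_mult comp_diff differentiable_const) (simp_all add: comp_diff)
    then show ?thesis using V True by (simp add: Sten_def vc_def)
  qed (simp add: Sten_def V)
qed (simp_all add: Sten_def)

lemma Sten_lin: "(\<Sum>c\<in>UNIV. Sten \<alpha> q (axis c 1) $ c' * Y $ c) = Sten \<alpha> q Y $ c'"
proof (cases c')
  case (V i \<beta>)
  show ?thesis
  proof (cases "\<beta> = \<alpha>")
    case True
    have "(\<Sum>c\<in>UNIV. ((axis c 1 :: ('a,'b) pt) $ Q i - (\<Sum>\<gamma>\<in>UNIV. vc q i \<gamma> * (axis c 1 :: ('a,'b) pt) $ X \<gamma>)) * Y $ c)
       = (\<Sum>c\<in>UNIV. (axis c 1 :: ('a,'b) pt) $ Q i * Y $ c) - (\<Sum>c\<in>UNIV. \<Sum>\<gamma>\<in>UNIV. vc q i \<gamma> * ((axis c 1 :: ('a,'b) pt) $ X \<gamma> * Y $ c))"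
      by (simp add: left_diff_distrib sum_subtractf sum_distrib_right mult.assoc)
    also have "\<dots> = Y $ Q i - (\<Sum>\<gamma>\<in>UNIV. vc q i \<gamma> * (\<Sum>c\<in>UNIV. (axis c 1 :: ('a,'b) pt) $ X \<gamma> * Y $ c))"
    proof -
      have A: "(\<Sum>c\<in>UNIV. (axis c 1 :: ('a,'b) pt) $ Q i * Y $ c) = Y $ Q i"
        by (simp add: axis1_nth sum_ind1)
      have C: "(\<Sum>c\<in>UNIV. \<Sum>\<gamma>\<in>UNIV. vc q i \<gamma> * ((axis c 1 :: ('a,'b) pt) $ X \<gamma> * Y $ c))
          = (\<Sum>\<gamma>\<in>UNIV. vc q i \<gamma> * (\<Sum>c\<in>UNIV. (axis c 1 :: ('a,'b) pt) $ X \<gamma> * Y $ c))"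
        by (subst sum.swap) (simp add: sum_distrib_left)
      show ?thesis by (simp only: A C)
    qed
    also have "\<dots> = Y $ Q i - (\<Sum>\<gamma>\<in>UNIV. vc q i \<gamma> * Y $ X \<gamma>)"
      by (simp add: axis1_nth sum_ind1)
    finally show ?thesis using V True by (simp add: Sten_def)
  qed (simp add: Sten_def V)
qed (simp_all add: Sten_def)

lemma Theta_contract:
  "(\<Sum>c\<in>UNIV. Theta L \<alpha> q c * Y $ c) = L q * Y $ X \<alpha> + (\<Sum>c'\<in>UNIV. pd c' L q * Sten \<alpha> q Y $ c')"
proof -
  have "(\<Sum>c\<in>UNIV. Theta L \<alpha> q c * Y $ c)
     = (\<Sum>c\<in>UNIV. L q * (if c = X \<alpha> then 1 else 0) * Y $ c) + (\<Sum>c\<in>UNIV. \<Sum>c'\<in>UNIV. pd c' L q * (Sten \<alpha> q (axis c 1) $ c' * Y $ c))"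
    unfolding Theta_def ev_def dF_def by (simp add: distrib_right sum.distrib sum_distrib_right mult.assoc)
  also have "\<dots> = L q * Y $ X \<alpha> + (\<Sum>c'\<in>UNIV. pd c' L q * (\<Sum>c\<in>UNIV. Sten \<alpha> q (axis c 1) $ c' * Y $ c))"
  proof -
    have A: "(\<Sum>c\<in>UNIV. L q * (if c = X \<alpha> then 1 else 0) * Y $ c) = L q * Y $ X \<alpha>"
      by (rule sum_ind2)
    have C: "(\<Sum>c\<in>UNIV. \<Sum>c'\<in>UNIV. pd c' L q * (Sten \<alpha> q (axis c 1) $ c' * Y $ c))
       = (\<Sum>c'\<in>UNIV. pd c' L q * (\<Sum>c\<in>UNIV. Sten \<alpha> q (axis c 1) $ c' * Y $ c))"
      by (subst sum.swap) (simp add: sum_distrib_left)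
    show ?thesis by (simp only: A C)
  qed
  finally show ?thesis by (simp add: Sten_lin)
qed

lemma Theta_Gamma:
  assumes "is_SOPDE U \<Gamma>" "q \<in> U"
  shows "(\<Sum>c\<in>UNIV. Theta L \<alpha> q c * \<Gamma> \<alpha> q $ c) = L q"
proof -
  have "Sten \<alpha> q (\<Gamma> \<alpha> q) $ c' = 0" for c'
    using assms unfolding is_SOPDE_def Sten_def by (cases c') auto
  moreover have "\<Gamma> \<alpha> q $ X \<alpha> = 1" using assms unfolding is_SOPDE_def by auto
  ultimately show ?thesis by (simp add: Theta_contract)
qed

lemma Theta_diff:
  assumes "open U" "smooth_on U L" "p \<in> U"
  shows "(\<lambda>q. Theta L \<alpha> q c) differentiable (at p)"
proof -
  have dL: "pds cs L differentiable (at p)" for cs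
    using assms unfolding smooth_on_def by (meson differentiable_on_eq_differentiable_at)
  have L: "L differentiable (at p)" using dL[of "[]"] by simp
  have P: "(\<lambda>q. pd c' L q) differentiable (at p)" for c'
    using dL[of "[c']"] by simp
  show ?thesis unfolding Theta_def ev_def dF_def
    by (intro differentiable_add differentiable_mult differentiable_sum L P Sten_diff differentiable_const) (auto intro!: differentiable_mult P Sten_diff)
qed

theorem mainTheorem4:
  fixes U :: "('k::finite, 'n::finite) pt set"
    and L :: "('k, 'n) pt \<Rightarrow> real"
    and \<Gamma> :: "'k \<Rightarrow> ('k, 'n) vfield"
  assumes "open U"
    and "smooth_on U L"
    and "\<forall>\<alpha> a. smooth_on U (\<lambda>p. \<Gamma> \<alpha> p $ a)"
    and "is_SOPDE U \<Gamma>"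
  shows "(\<forall>p\<in>U. \<forall>b. (\<Sum>\<alpha>\<in>UNIV. lie (\<Gamma> \<alpha>) (Theta L \<alpha>) p b) = dF L p b)
     \<longleftrightarrow> (\<forall>p\<in>U. \<forall>b. (\<Sum>\<alpha>\<in>UNIV. iv (\<Gamma> \<alpha>) (Omega L \<alpha>) p b)
                        = (real CARD('k) - 1) * dF L p b)"
proof -
  have key: "(\<Sum>\<alpha>\<in>UNIV. lie (\<Gamma> \<alpha>) (Theta L \<alpha>) p b)
      = - (\<Sum>\<alpha>\<in>UNIV. iv (\<Gamma> \<alpha>) (Omega L \<alpha>) p b) + real CARD('k) * dF L p b"
    if pU: "p \<in> U" for p b
  proof -
    have dG: "(\<lambda>q. \<Gamma> \<alpha> q $ a) differentiable (at p)" for \<alpha> a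
    proof -
      have "pds [] (\<lambda>q. \<Gamma> \<alpha> q $ a) differentiable_on U"
        using assms(3) unfolding smooth_on_def by blast
      then show ?thesis using assms(1) pU by (simp add: differentiable_on_eq_differentiable_at)
    qed
    have dT: "(\<lambda>q. Theta L \<alpha> q c) differentiable (at p)" for \<alpha> c
      by (rule Theta_diff[OF assms(1,2) pU])
    have dL: "L differentiable (at p)"
      using assms(1,2) pU unfolding smooth_on_def
      by (metis pds.simps(1) differentiable_on_eq_differentiable_at)
    have c: "lie (\<Gamma> \<alpha>) (Theta L \<alpha>) p b = iv (\<Gamma> \<alpha>) (d1 (Theta L \<alpha>)) p b
        + pd b (\<lambda>q. \<Sum>a\<in>UNIV. Theta L \<alpha> q a * \<Gamma> \<alpha> q $ a) p" for \<alpha>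
      by (rule cartan) (rule dT, rule dG)
    have om: "iv (\<Gamma> \<alpha>) (Omega L \<alpha>) p b = - iv (\<Gamma> \<alpha>) (d1 (Theta L \<alpha>)) p b" for \<alpha>
      unfolding iv_def Omega_def by (simp add: sum_negf)
    have "(\<Sum>\<alpha>\<in>UNIV. pd b (\<lambda>q. \<Sum>a\<in>UNIV. Theta L \<alpha> q a * \<Gamma> \<alpha> q $ a) p)
        = pd b (\<lambda>q. \<Sum>\<alpha>\<in>UNIV. \<Sum>a\<in>UNIV. Theta L \<alpha> q a * \<Gamma> \<alpha> q $ a) p"
      by (rule pd_sum[symmetric]) (auto intro!: differentiable_sum differentiable_mult dT dG)
    also have "\<dots> = pd b (\<lambda>q. real CARD('k) * L q) p"
      by (rule pd_cong_open[OF assms(1) pU]) (simp add: Theta_Gamma[OF assms(4)])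
    also have "\<dots> = real CARD('k) * dF L p b"
      unfolding dF_def by (rule pd_cmult[OF dL])
    finally have s: "(\<Sum>\<alpha>\<in>UNIV. pd b (\<lambda>q. \<Sum>a\<in>UNIV. Theta L \<alpha> q a * \<Gamma> \<alpha> q $ a) p) = real CARD('k) * dF L p b" .
    show ?thesis
      by (simp add: c om sum.distrib s sum_negf)
  qed
  show ?thesis
  proof
    assume h: "\<forall>p\<in>U. \<forall>b. (\<Sum>\<alpha>\<in>UNIV. lie (\<Gamma> \<alpha>) (Theta L \<alpha>) p b) = dF L p b"
    show "\<forall>p\<in>U. \<forall>b. (\<Sum>\<alpha>\<in>UNIV. iv (\<Gamma> \<alpha>) (Omega L \<alpha>) p b) = (real CARD('k) - 1) * dF L p b"
    proof (intro ballI allI)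
      fix p b assume "p \<in> U"
      have "(\<Sum>\<alpha>\<in>UNIV. lie (\<Gamma> \<alpha>) (Theta L \<alpha>) p b) = dF L p b" using h \<open>p \<in> U\<close> by blast
      with key[OF \<open>p \<in> U\<close>, of b] show "(\<Sum>\<alpha>\<in>UNIV. iv (\<Gamma> \<alpha>) (Omega L \<alpha>) p b) = (real CARD('k) - 1) * dF L p b"
        by (simp add: algebra_simps)
    qed
  next
    assume h: "\<forall>p\<in>U. \<forall>b. (\<Sum>\<alpha>\<in>UNIV. iv (\<Gamma> \<alpha>) (Omega L \<alpha>) p b) = (real CARD('k) - 1) * dF L p b"
    show "\<forall>p\<in>U. \<forall>b. (\<Sum>\<alpha>\<in>UNIV. lie (\<Gamma> \<alpha>) (Theta L \<alpha>) p b) = dF L p b"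
    proof (intro ballI allI)
      fix p b assume "p \<in> U"
      have "(\<Sum>\<alpha>\<in>UNIV. iv (\<Gamma> \<alpha>) (Omega L \<alpha>) p b) = (real CARD('k) - 1) * dF L p b" using h \<open>p \<in> U\<close> by blast
      with key[OF \<open>p \<in> U\<close>, of b] show "(\<Sum>\<alpha>\<in>UNIV. lie (\<Gamma> \<alpha>) (Theta L \<alpha>) p b) = dF L p b"
        by (simp add: algebra_simps)
    qed
  qed
qed

end
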